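(* Let $\mathbf{V}$ be a finite tuple of random variables with joint distribution $\mathbb{P}(\mathbf{V})$, consisting of system variables $\{X_j\}_{j\in\mathcal{J}}$ and context variables $\{C_i\}_{i\in\mathcal{I}}$, and let $\mathcal{G}$ be an acyclic directed mixed graph (ADMG) on $\mathbf{V}$ (the causal graph). Let $C_1$ be a distinguished context variable taking values in $\{0,1\}$ (the source/target domain indicator, with both values having positive probability), and let $Y = X_j$ be a distinguished system variable (the target variable). Assume: (i) $\mathbb{P}(\mathbf{V})$ is Markov and faithful with respect to $\mathcal{G}$; (ii) for all subsets $\mathbf{A},\mathbf{B},\mathbf{S}\subseteq\mathbf{V}$ such that $\mathbf{A}\cup\mathbf{B}\cup\mathbf{S}$ contains $Y$ but not $C_1$: if $\mathbf{A}\perp\!\!\!\perp \mathbf{B}\mid \mathbf{S}$ holds in $\mathbb{P}(\mathbf{V}\mid C_1=0)$, then $\mathbf{A}\perp\!\!\!\perp \mathbf{B}\mid \mathbf{S}$ holds in $\mathbb{P}(\mathbf{V}\mid C_1=1)$; (iii) $\mathcal{G}$ contains no directed edge $C_1\to Y$. Then for all subsets $\mathbf{A},\mathbf{B},\mathbf{S}\subseteq\mathbf{V}$ such that $\mathbf{A}\cup\mathbf{B}\cup\mathbf{S}$ contains $Y$ but not $C_1$, the following are equivalent: (1) $\mathbf{A}\perp\!\!\!\perp\mathbf{B}\mid\mathbf{S}$ in $\mathbb{P}(\mathbf{V}\mid C_1=0)$; (2) $\mathbf{A}\perp\!\!\!\perp\mathbf{B}\mid\mathbf{S}\cup\{C_1\}$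 in $\mathbb{P}(\mathbf{V})$; (3) $\mathbf{A}$ and $\mathbf{B}$ are d-separated by $\mathbf{S}\cup\{C_1\}$ in $\mathcal{G}$.
   Context: The data-generating process is a structural causal model: each context variable is $C_i = g_i(\mathbf{E}_{\mathrm{pa}(i)\cap\mathcal{K}})$ and each system variable is $X_j = f_j(\mathbf{X}_{\mathrm{pa}(j)\cap\mathcal{J}},\mathbf{C}_{\mathrm{pa}(j)\cap\mathcal{I}},\mathbf{E}_{\mathrm{pa}(j)\cap\mathcal{K}})$, with jointly independent exogenous latent noise variables $(E_k)_{k\in\mathcal{K}}$. Its causal graph $\mathcal{G}$ has nodes the context and system variables, a directed edge $l_1\to l_2$ iff $l_1$ is a parent of $l_2$, and a bidirected edge $l_1\leftrightarrow l_2$ iff they share a latent parent $E_k$; it is assumed acyclic (an ADMG). d-separation in an ADMG is the usual (m-)separation criterion. "Markov w.r.t. $\mathcal{G}$" means every d-separation $\mathbf{A}\perp\mathbf{B}\mid\mathbf{S}$ in $\mathcal{G}$ implies the conditional independence $\mathbf{A}\perp\!\!\!\perp\mathbf{B}\mid\mathbf{S}$ in $\mathbb{P}(\mathbf{V})$; "faithful" means the converse: every conditional independence in $\mathbb{P}(\mathbf{V})$ corresponds to a d-separation in $\mathcal{G}$. Conditional independence "in $\mathbb{P}(\mathbf{V}\mid C_1=c)$" refers to the pooled (mixture) distribution over all domains with $C_1=c$. *)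

theory Defs
  imports "HOL-Probability.Probability"
begin

text \<open>An ADMG on the node set V is given by a set D of directed edges (a,b) meaning a \<rightarrow> b
  and a symmetric set Bi of bidirected edges.\<close>

definition admg :: "'v set \<Rightarrow> ('v \<times> 'v) set \<Rightarrow> ('v \<times> 'v) set \<Rightarrow> bool" where
  "admg V D Bi \<longleftrightarrow> D \<subseteq> V \<times> V \<and> Bi \<subseteq> V \<times> V \<and> sym Bi \<and> (\<forall>v. (v, v) \<notin> Bi) \<and> acyclic D"

datatype ekind = Fwd | Bwd | Bid

definition edge_ok :: "('v \<times> 'v) set \<Rightarrow> ('v \<times> 'v) set \<Rightarrow> 'v \<Rightarrow> ekind \<Rightarrow> 'v \<Rightarrow> bool" where
  "edge_ok D Bi x k y = (case k of Fwd \<Rightarrow> (x, y) \<in> D | Bwd \<Rightarrow> (y, x) \<in> D | Bid \<Rightarrow> (x, y) \<in> Bi)"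

definition is_walk :: "('v \<times> 'v) set \<Rightarrow> ('v \<times> 'v) set \<Rightarrow> 'v list \<Rightarrow> ekind list \<Rightarrow> bool" where
  "is_walk D Bi vs es \<longleftrightarrow> length vs = Suc (length es) \<and>
     (\<forall>i < length es. edge_ok D Bi (vs ! i) (es ! i) (vs ! Suc i))"

definition head_right :: "ekind \<Rightarrow> bool" where
  "head_right k \<longleftrightarrow> k = Fwd \<or> k = Bid"

definition head_left :: "ekind \<Rightarrow> bool" where
  "head_left k \<longleftrightarrow> k = Bwd \<or> k = Bid"

definition collider :: "ekind list \<Rightarrow> nat \<Rightarrow> bool" where
  "collider es i \<longleftrightarrow> 0 < i \<and> i < length es \<and> head_right (es ! (i - 1)) \<and> head_left (es ! i)"

definition ancestors :: "('v \<times> 'v) set \<Rightarrow> 'v set \<Rightarrow> 'v set" where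
  "ancestors D S = {a. \<exists>s \<in> S. (a, s) \<in> D\<^sup>*}"

text \<open>A walk is S-open iff every collider is an ancestor of S and every non-collider
  (including both end nodes) is not in S.\<close>
definition d_open :: "('v \<times> 'v) set \<Rightarrow> 'v set \<Rightarrow> 'v list \<Rightarrow> ekind list \<Rightarrow> bool" where
  "d_open D S vs es \<longleftrightarrow>
     (\<forall>i < length vs. if collider es i then vs ! i \<in> ancestors D S else vs ! i \<notin> S)"

definition d_separated :: "('v \<times> 'v) set \<Rightarrow> ('v \<times> 'v) set \<Rightarrow> 'v set \<Rightarrow> 'v set \<Rightarrow> 'v set \<Rightarrow> bool" where
  "d_separated D Bi A B S \<longleftrightarrow>
     (\<forall>vs es. is_walk D Bi vs es \<and> hd vs \<in> A \<and> last vs \<in> B \<longrightarrow> \<not> d_open D S vs es)"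

definition gen_sigma :: "'a measure \<Rightarrow> ('v \<Rightarrow> 'a \<Rightarrow> 'b) \<Rightarrow> ('v \<Rightarrow> 'b measure) \<Rightarrow> 'v set \<Rightarrow> 'a measure" where
  "gen_sigma M X N A = sigma (space M) {X v -` E \<inter> space M | v E. v \<in> A \<and> E \<in> sets (N v)}"

definition cond_indep :: "'a measure \<Rightarrow> ('v \<Rightarrow> 'a \<Rightarrow> 'b) \<Rightarrow> ('v \<Rightarrow> 'b measure) \<Rightarrow>
    'v set \<Rightarrow> 'v set \<Rightarrow> 'v set \<Rightarrow> bool" where
  "cond_indep M X N A B S \<longleftrightarrow>
     (\<forall>E \<in> sets (gen_sigma M X N A). \<forall>F \<in> sets (gen_sigma M X N B).
        AE \<omega> in M. real_cond_exp M (gen_sigma M X N S) (indicator (E \<inter> F)) \<omega> =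
          real_cond_exp M (gen_sigma M X N S) (indicator E) \<omega> *
          real_cond_exp M (gen_sigma M X N S) (indicator F) \<omega>)"

definition cond_on :: "'a measure \<Rightarrow> ('v \<Rightarrow> 'a \<Rightarrow> 'b) \<Rightarrow> 'v \<Rightarrow> 'b \<Rightarrow> 'a measure" where
  "cond_on M X c d = uniform_measure M {\<omega> \<in> space M. X c \<omega> = d}"

end

theory Submission
  imports Defs
begin

lemma unif_density:
  assumes P: "prob_space M" and T: "T \<in> sets M" "measure M T > 0"
  shows "uniform_measure M T = density M (\<lambda>x. ennreal (indicator T x / measure M T))"
proof -
  interpret prob_space M by fact
  have "\<And>x. (indicator T x :: ennreal) / emeasure M T = ennreal (indicator T x / measure M T)"
    using T by (auto simp: emeasure_eq_measure split: split_indicator) (metis divide_ennreal ennreal_1 zero_le_one)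
  then show ?thesis unfolding uniform_measure_def by simp
qed

lemma core:
  fixes f :: "'a \<Rightarrow> real"
  assumes P: "prob_space M" and T: "T \<in> sets M" "measure M T > 0"
    and subF: "subalgebra M F" and subF': "subalgebra M F'"
    and FF': "sets F \<subseteq> sets F'" and TF': "T \<in> sets F'"
    and tr: "\<And>A. A \<in> sets F' \<Longrightarrow> \<exists>B\<in>sets F. A \<inter> T = B \<inter> T"
    and f: "integrable M f"
  shows "AE x in M. x \<in> T \<longrightarrow> real_cond_exp M F' f x = real_cond_exp (uniform_measure M T) F f x"
proof -
  interpret prob_space M by fact
  define p where "p = measure M T"
  have p: "p > 0" using T p_def by simp
  define M0 where "M0 = uniform_measure M T"
  have M0d: "M0 = density M (\<lambda>x. ennreal (indicator T x / p))"
    unfolding M0_def p_def by (rule unif_density[OF P T])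
  have [simp]: "sets M0 = sets M" "space M0 = space M" unfolding M0_def by auto
  have PM0: "prob_space M0" unfolding M0_def
    by (rule prob_space_uniform_measure) (use T in \<open>auto simp: emeasure_eq_measure\<close>)
  have subF0: "subalgebra M0 F" using subF by (auto simp: subalgebra_def)
  interpret F0: finite_measure_subalgebra M0 F
    using PM0 subF0 by (intro finite_measure_subalgebra.intro finite_measure_subalgebra_axioms.intro) (auto simp: prob_space_def)
  interpret F': finite_measure_subalgebra M F'
    using subF' P by (intro finite_measure_subalgebra.intro finite_measure_subalgebra_axioms.intro) (auto simp: prob_space_def)
  have mM0: "measurable M0 (borel :: real measure) = measurable M borel"
    by (rule measurable_cong_sets) simp_all
  have measM0: "\<And>u::'a\<Rightarrow>real. u \<in> borel_measurable M0 \<longleftrightarrow> u \<in> borel_measurable M"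
    by (simp only: mM0)
  have dens_int: "\<And>u. u \<in> borel_measurable M \<Longrightarrow> integrable M0 u \<longleftrightarrow> integrable M (\<lambda>x. (indicator T x / p) * u x)"
    unfolding M0d using T p by (subst integrable_density) (simp_all add: borel_measurable_indicator)
  have dens_integral: "\<And>u. u \<in> borel_measurable M \<Longrightarrow> integral\<^sup>L M0 u = integral\<^sup>L M (\<lambda>x. (indicator T x / p) * u x)"
    unfolding M0d using T p by (subst integral_density) (simp_all add: borel_measurable_indicator)
  have fmeas: "f \<in> borel_measurable M" using f by auto
  have fT: "integrable M (\<lambda>x. indicator T x * f x)" using integrable_mult_indicator[OF T(1) f] by simp
  have "integrable M (\<lambda>x. (1/p) * (indicator T x * f x))" using fT by simp
  then have fM0: "integrable M0 f"
    using dens_int[OF fmeas] by (simp add: mult.commute mult.left_commute)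
  define c0 where "c0 = real_cond_exp M0 F f"
  define h where "h = real_cond_exp M F' f"
  have c0int: "integrable M0 c0" unfolding c0_def using fM0 by (rule F0.real_cond_exp_int)
  have c0F: "c0 \<in> borel_measurable F" unfolding c0_def by simp
  have c0M: "c0 \<in> borel_measurable M" unfolding c0_def using measM0 borel_measurable_cond_exp2 by blast
  have "integrable M (\<lambda>x. (indicator T x / p) * c0 x)" using c0int dens_int[OF c0M] by simp
  then have "integrable M (\<lambda>x. p * ((indicator T x / p) * c0 x))" by (rule integrable_mult_right)
  moreover have "(\<lambda>x. p * ((indicator T x / p) * c0 x)) = (\<lambda>x. indicator T x * c0 x)" using p by auto
  ultimately have c0T: "integrable M (\<lambda>x. indicator T x * c0 x)" by simp
  have hint: "integrable M h" unfolding h_def using f by (rule F'.real_cond_exp_int)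
  have key: "(LINT x|M. indicator (B \<inter> T) x * c0 x) = (LINT x|M. indicator (B \<inter> T) x * f x)"
    if B: "B \<in> sets F" for B
  proof -
    have BM: "B \<in> sets M" using B subF by (auto simp: subalgebra_def)
    have e1: "\<And>u. (\<lambda>x. indicator (B \<inter> T) x * u x) = (\<lambda>x. p * ((indicator T x / p) * (indicator B x * u x)))"
      using p by (auto split: split_indicator)
    have "(LINT x|M. indicator (B \<inter> T) x * c0 x) = p * (LINT x|M. (indicator T x / p) * (indicator B x * c0 x))"
      by (simp only: e1) simp
    also have "\<dots> = p * (LINT x|M0. indicator B x * c0 x)"
      using BM c0M by (subst dens_integral) auto
    also have "\<dots> = p * (\<integral>x\<in>B. c0 x \<partial>M0)" by (simp add: set_lebesgue_integral_def)
    also have "\<dots> = p * (\<integral>x\<in>B. f x \<partial>M0)" unfolding c0_def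
      using F0.real_cond_exp_intA[OF fM0 B] by simp
    also have "\<dots> = p * (LINT x|M0. indicator B x * f x)" by (simp add: set_lebesgue_integral_def)
    also have "\<dots> = p * (LINT x|M. (indicator T x / p) * (indicator B x * f x))"
      using BM fmeas by (subst dens_integral) auto
    also have "\<dots> = (LINT x|M. indicator (B \<inter> T) x * f x)"
      by (simp only: e1) simp
    finally show ?thesis .
  qed
  define g where "g x = indicator T x * c0 x + indicator (space M - T) x * h x" for x
  have TM: "T \<in> sets M" by fact
  have SF': "space F' = space M" using subF' by (simp add: subalgebra_def)
  have TcF': "space M - T \<in> sets F'" using TF' SF' by (metis sets.compl_sets)
  have gF': "g \<in> borel_measurable F'"
  proof -
    have "c0 \<in> borel_measurable F'"
      using c0F FF' subF subF' by (metis measurable_from_subalg subalgebra_def)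
    moreover have "h \<in> borel_measurable F'" unfolding h_def by simp
    ultimately show ?thesis unfolding g_def using TF' TcF' by measurable
  qed
  have TcM: "space M - T \<in> sets M" using TM by (rule sets.compl_sets)
  have gint: "integrable M g" unfolding g_def
    using c0T integrable_mult_indicator[OF TcM hint] by auto
  have "AE x in M. real_cond_exp M F' f x = g x"
  proof (rule F'.real_cond_exp_charact[OF _ f gint gF'])
    fix A assume A: "A \<in> sets F'"
    have AM: "A \<in> sets M" using A subF' by (auto simp: subalgebra_def)
    have Asp: "A \<subseteq> space M" using AM sets.sets_into_space by auto
    obtain B where B: "B \<in> sets F" "A \<inter> T = B \<inter> T" using tr[OF A] by blast
    have ADF': "A - T \<in> sets F'" using A TF' by auto
    have ADM: "A - T \<in> sets M" using AM TM by auto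
    have i1: "integrable M (\<lambda>x. indicator (A \<inter> T) x * c0 x)"
      using integrable_mult_indicator[OF AM c0T] by (simp add: indicator_inter_arith mult.assoc)
    have i2: "integrable M (\<lambda>x. indicator (A - T) x * h x)"
      using integrable_mult_indicator[OF ADM hint] by simp
    have i3: "integrable M (\<lambda>x. indicator (A \<inter> T) x * f x)"
      using integrable_mult_indicator[OF _ f, of "A \<inter> T"] AM TM by simp
    have i4: "integrable M (\<lambda>x. indicator (A - T) x * f x)"
      using integrable_mult_indicator[OF ADM f] by simp
    have "(\<integral>x\<in>A. g x \<partial>M) = (LINT x|M. indicator (A \<inter> T) x * c0 x + indicator (A - T) x * h x)"
      unfolding set_lebesgue_integral_def g_def
      by (rule Bochner_Integration.integral_cong) (use Asp in \<open>auto split: split_indicator\<close>)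
    also have "\<dots> = (LINT x|M. indicator (A \<inter> T) x * c0 x) + (LINT x|M. indicator (A - T) x * h x)"
      using i1 i2 by simp
    also have "(LINT x|M. indicator (A \<inter> T) x * c0 x) = (LINT x|M. indicator (A \<inter> T) x * f x)"
      using key[OF B(1)] B(2) by simp
    also have "(LINT x|M. indicator (A - T) x * h x) = (LINT x|M. indicator (A - T) x * f x)"
      using F'.real_cond_exp_intA[OF f ADF'] unfolding h_def set_lebesgue_integral_def by simp
    also have "(LINT x|M. indicator (A \<inter> T) x * f x) + (LINT x|M. indicator (A - T) x * f x)
        = (LINT x|M. indicator (A \<inter> T) x * f x + indicator (A - T) x * f x)"
      using i3 i4 by simp
    also have "\<dots> = (\<integral>x\<in>A. f x \<partial>M)"
      unfolding set_lebesgue_integral_def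
      by (rule Bochner_Integration.integral_cong) (auto split: split_indicator)
    finally show "(\<integral>x\<in>A. f x \<partial>M) = (\<integral>x\<in>A. g x \<partial>M)" by simp
  qed
  then show ?thesis
    by eventually_elim (auto simp: g_def c0_def M0_def h_def indicator_def)
qed

lemma trace_sigma:
  assumes GG: "G \<subseteq> G'" and TO: "T \<subseteq> \<Omega>"
    and gen: "\<And>a. a \<in> G' \<Longrightarrow> a \<in> G \<or> a \<inter> T = T \<or> a \<inter> T = {}"
    and A: "A \<in> sigma_sets \<Omega> G'"
  shows "\<exists>B \<in> sigma_sets \<Omega> G. A \<inter> T = B \<inter> T"
  using A
proof induct
  case (Basic a)
  from gen[OF Basic] show ?case
  proof (elim disjE)
    assume "a \<in> G" then show ?thesis by (intro bexI[of _ a]) auto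
  next
    assume "a \<inter> T = T" then show ?thesis
      using TO by (intro bexI[of _ \<Omega>]) (auto intro: sigma_sets_top)
  next
    assume "a \<inter> T = {}" then show ?thesis
      by (intro bexI[of _ "{}"]) (auto intro: sigma_sets.Empty)
  qed
next
  case Empty then show ?case by (intro bexI[of _ "{}"]) (auto intro: sigma_sets.Empty)
next
  case (Compl a)
  then obtain b where b: "b \<in> sigma_sets \<Omega> G" "a \<inter> T = b \<inter> T" by blast
  have "(\<Omega> - a) \<inter> T = (\<Omega> - b) \<inter> T" using b(2) TO by blast
  then show ?case using b(1) by (intro bexI[of _ "\<Omega> - b"]) (auto intro: sigma_sets.Compl)
next
  case (Union a)
  then have "\<forall>i. \<exists>b. b \<in> sigma_sets \<Omega> G \<and> a i \<inter> T = b \<inter> T" by blast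
  then obtain b where b: "\<And>i. b i \<in> sigma_sets \<Omega> G" "\<And>i. a i \<inter> T = b i \<inter> T" by metis
  have "(\<Union>i. a i) \<inter> T = (\<Union>i. b i) \<inter> T" using b(2) by blast
  then show ?case using b(1) by (intro bexI[of _ "\<Union>i. b i"]) (auto intro: sigma_sets.Union)
qed

lemma domain_equiv:
  assumes P: "prob_space M" and T: "T \<in> sets M" "measure M T > 0"
    and subF: "subalgebra M F" and subF': "subalgebra M F'"
    and FF': "sets F \<subseteq> sets F'" and TF': "T \<in> sets F'"
    and tr: "\<And>A. A \<in> sets F' \<Longrightarrow> \<exists>B\<in>sets F. A \<inter> T = B \<inter> T"
    and G: "G \<in> sets M" and H: "H \<in> sets M"
  shows "AE x in M. x \<in> T \<longrightarrow>
     ((real_cond_exp M F' (indicator (G \<inter> H)) x = real_cond_exp M F' (indicator G) x * real_cond_exp M F' (indicator H) x)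
      \<longleftrightarrow> (real_cond_exp (uniform_measure M T) F (indicator (G \<inter> H)) x =
           real_cond_exp (uniform_measure M T) F (indicator G) x * real_cond_exp (uniform_measure M T) F (indicator H) x))"
proof -
  interpret prob_space M by fact
  have int: "integrable M (indicator K :: 'a \<Rightarrow> real)" if "K \<in> sets M" for K
    using that by (intro integrable_real_indicator) (auto simp: emeasure_eq_measure)
  have c: "AE x in M. x \<in> T \<longrightarrow> real_cond_exp M F' f x = real_cond_exp (uniform_measure M T) F f x"
    if "integrable M f" for f
    by (rule core[OF P T subF subF' FF' TF']) (use tr that in auto)
  have GH: "G \<inter> H \<in> sets M" using G H by auto
  show ?thesis
    using c[OF int[OF G]] c[OF int[OF H]] c[OF int[OF GH]]
    by eventually_elim simp
qed

lemma gen_sigma_facts: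
  assumes rv: "\<And>v. v \<in> A \<Longrightarrow> X v \<in> measurable M (N v)"
  shows "space (gen_sigma M X N A) = space M"
    and "sets (gen_sigma M X N A) = sigma_sets (space M) {X v -` E \<inter> space M | v E. v \<in> A \<and> E \<in> sets (N v)}"
    and "subalgebra M (gen_sigma M X N A)"
proof -
  let ?G = "{X v -` E \<inter> space M | v E. v \<in> A \<and> E \<in> sets (N v)}"
  have GP: "?G \<subseteq> Pow (space M)" by auto
  have GM: "?G \<subseteq> sets M" using rv by (auto intro: measurable_sets)
  show sp: "space (gen_sigma M X N A) = space M" unfolding gen_sigma_def by (simp add: space_measure_of_conv)
  show st: "sets (gen_sigma M X N A) = sigma_sets (space M) ?G" unfolding gen_sigma_def
    using GP by (simp add: sets_measure_of)
  show "subalgebra M (gen_sigma M X N A)" unfolding subalgebra_def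
    using sp st sets.sigma_sets_subset[OF GM] by simp
qed

theorem proposition1:
  fixes V Ctx Sys :: "'v set"
    and D Bi :: "('v \<times> 'v) set"
    and M :: "'a measure"
    and X :: "'v \<Rightarrow> 'a \<Rightarrow> 'b"
    and N :: "'v \<Rightarrow> 'b measure"
    and C1 Y :: 'v
    and d0 d1 :: 'b
  assumes finV: "finite V"
    and part: "Ctx \<union> Sys = V" "Ctx \<inter> Sys = {}"
    and C1_ctx: "C1 \<in> Ctx" and Y_sys: "Y \<in> Sys"
    and P: "prob_space M"
    and rv: "\<And>v. v \<in> V \<Longrightarrow> X v \<in> measurable M (N v)"
    and G: "admg V D Bi"
    and d01: "d0 \<noteq> d1"
    and NC1: "N C1 = count_space {d0, d1}"
    and pos0: "measure M {\<omega> \<in> space M. X C1 \<omega> = d0} > 0"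
    and pos1: "measure M {\<omega> \<in> space M. X C1 \<omega> = d1} > 0"
    and markov: "\<And>A B S. A \<subseteq> V \<Longrightarrow> B \<subseteq> V \<Longrightarrow> S \<subseteq> V \<Longrightarrow>
                   d_separated D Bi A B S \<Longrightarrow> cond_indep M X N A B S"
    and faithful: "\<And>A B S. A \<subseteq> V \<Longrightarrow> B \<subseteq> V \<Longrightarrow> S \<subseteq> V \<Longrightarrow>
                   cond_indep M X N A B S \<Longrightarrow> d_separated D Bi A B S"
    and transfer: "\<And>A B S. A \<subseteq> V \<Longrightarrow> B \<subseteq> V \<Longrightarrow> S \<subseteq> V \<Longrightarrow>
                   Y \<in> A \<union> B \<union> S \<Longrightarrow> C1 \<notin> A \<union> B \<union> S \<Longrightarrow>
                   cond_indep (cond_on M X C1 d0) X N A B S \<Longrightarrow>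
                   cond_indep (cond_on M X C1 d1) X N A B S"
    and no_edge: "(C1, Y) \<notin> D"
    and sets: "A \<subseteq> V" "B \<subseteq> V" "S \<subseteq> V" "Y \<in> A \<union> B \<union> S" "C1 \<notin> A \<union> B \<union> S"
  shows "(cond_indep (cond_on M X C1 d0) X N A B S \<longleftrightarrow> cond_indep M X N A B (S \<union> {C1}))
       \<and> (cond_indep M X N A B (S \<union> {C1}) \<longleftrightarrow> d_separated D Bi A B (S \<union> {C1}))"
proof -
  interpret prob_space M by fact
  have C1V: "C1 \<in> V" using part C1_ctx by blast
  have SV': "S \<union> {C1} \<subseteq> V" using sets C1V by auto
  have second: "cond_indep M X N A B (S \<union> {C1}) \<longleftrightarrow> d_separated D Bi A B (S \<union> {C1})"
    using markov faithful sets(1,2) SV' by blast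
  define FS where "FS = gen_sigma M X N S"
  define FS' where "FS' = gen_sigma M X N (S \<union> {C1})"
  define GS where "GS = {X v -` E \<inter> space M | v E. v \<in> S \<and> E \<in> sets (N v)}"
  define GS' where "GS' = {X v -` E \<inter> space M | v E. v \<in> S \<union> {C1} \<and> E \<in> sets (N v)}"
  have rvS: "\<And>v. v \<in> S \<Longrightarrow> X v \<in> measurable M (N v)" using rv sets(3) by blast
  have rvS': "\<And>v. v \<in> S \<union> {C1} \<Longrightarrow> X v \<in> measurable M (N v)" using rv SV' by blast
  have sFS: "sets FS = sigma_sets (space M) GS" and subF: "subalgebra M FS"
    unfolding FS_def GS_def using gen_sigma_facts[of S X M N, OF rvS] by auto
  have sFS': "sets FS' = sigma_sets (space M) GS'" and subF': "subalgebra M FS'"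
    unfolding FS'_def GS'_def using gen_sigma_facts[of "S \<union> {C1}" X M N, OF rvS'] by auto
  have GG: "GS \<subseteq> GS'" unfolding GS_def GS'_def by blast
  have FF': "sets FS \<subseteq> sets FS'" unfolding sFS sFS' using GG by (rule sigma_sets_mono')
  define T where "T d = {\<omega> \<in> space M. X C1 \<omega> = d}" for d
  have Teq: "T d = X C1 -` {d} \<inter> space M" for d unfolding T_def by auto
  have TF': "T d \<in> sets FS'" if "d \<in> {d0, d1}" for d
  proof -
    have "{d} \<in> sets (N C1)" using that NC1 by auto
    then have "T d \<in> GS'" unfolding Teq GS'_def by blast
    then show ?thesis unfolding sFS' by (rule sigma_sets.Basic)
  qed
  have TM: "T d \<in> sets M" if "d \<in> {d0, d1}" for d
    using TF'[OF that] subF' by (auto simp: subalgebra_def)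
  have tr: "\<exists>B\<in>sets FS. A' \<inter> T d = B \<inter> T d" if "d \<in> {d0, d1}" "A' \<in> sets FS'" for d A'
  proof -
    have "\<exists>B \<in> sigma_sets (space M) GS. A' \<inter> T d = B \<inter> T d"
    proof (rule trace_sigma[OF GG])
      show "T d \<subseteq> space M" unfolding T_def by auto
      show "A' \<in> sigma_sets (space M) GS'" using that sFS' by simp
      fix a assume "a \<in> GS'"
      then obtain v E where a: "a = X v -` E \<inter> space M" "v \<in> S \<union> {C1}" "E \<in> sets (N v)"
        unfolding GS'_def by blast
      show "a \<in> GS \<or> a \<inter> T d = T d \<or> a \<inter> T d = {}"
      proof (cases "v \<in> S")
        case True then show ?thesis using a unfolding GS_def by blast
      next
        case False then have "v = C1" using a by auto
        then show ?thesis using a unfolding T_def by (cases "d \<in> E") auto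
      qed
    qed
    then show ?thesis using sFS by simp
  qed
  have sp: "x \<in> T d0 \<or> x \<in> T d1" if "x \<in> space M" for x
    using measurable_space[OF rv[OF C1V] that] NC1 that unfolding T_def by auto
  have gsA: "gen_sigma (cond_on M X C1 d) X N K = gen_sigma M X N K" for d K
    by (simp add: gen_sigma_def cond_on_def)
  have rvA: "\<And>v. v \<in> A \<Longrightarrow> X v \<in> measurable M (N v)" using rv sets(1) by blast
  have rvB: "\<And>v. v \<in> B \<Longrightarrow> X v \<in> measurable M (N v)" using rv sets(2) by blast
  have sA: "sets (gen_sigma M X N A) \<subseteq> sets M"
    using gen_sigma_facts(3)[of A X M N, OF rvA] by (simp add: subalgebra_def)
  have sB: "sets (gen_sigma M X N B) \<subseteq> sets M"
    using gen_sigma_facts(3)[of B X M N, OF rvB] by (simp add: subalgebra_def)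
  define Q where "Q G H x \<longleftrightarrow> real_cond_exp M FS' (indicator (G \<inter> H)) x =
      real_cond_exp M FS' (indicator G) x * real_cond_exp M FS' (indicator H) x" for G H x
  define R where "R d G H x \<longleftrightarrow> real_cond_exp (uniform_measure M (T d)) FS (indicator (G \<inter> H)) x =
      real_cond_exp (uniform_measure M (T d)) FS (indicator G) x *
      real_cond_exp (uniform_measure M (T d)) FS (indicator H) x" for d G H x
  have ciM: "cond_indep M X N A B (S \<union> {C1}) \<longleftrightarrow>
      (\<forall>G\<in>sets (gen_sigma M X N A). \<forall>H\<in>sets (gen_sigma M X N B). AE x in M. Q G H x)"
    unfolding cond_indep_def Q_def FS'_def by simp
  have ciD: "cond_indep (cond_on M X C1 d) X N A B S \<longleftrightarrow>
      (\<forall>G\<in>sets (gen_sigma M X N A). \<forall>H\<in>sets (gen_sigma M X N B). AE x in M. x \<in> T d \<longrightarrow> R d G H x)"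
    if "measure M (T d) > 0" "d \<in> {d0, d1}" for d
  proof -
    have "emeasure M (T d) \<noteq> 0" "emeasure M (T d) < \<infinity>"
      using that TM[OF that(2)] by (auto simp: emeasure_eq_measure)
    then show ?thesis
      unfolding cond_indep_def gsA R_def FS_def unfolding cond_on_def T_def[symmetric]
      by (simp add: AE_uniform_measure)
  qed
  have dom: "AE x in M. x \<in> T d \<longrightarrow> (Q G H x \<longleftrightarrow> R d G H x)"
    if "measure M (T d) > 0" "d \<in> {d0, d1}" "G \<in> sets M" "H \<in> sets M" for d G H
    unfolding Q_def R_def
    by (rule domain_equiv[OF P TM[OF that(2)] that(1) subF subF' FF' TF'[OF that(2)] tr[OF that(2)] that(3,4)])
  have p0: "measure M (T d0) > 0" using pos0 unfolding T_def .
  have p1: "measure M (T d1) > 0" using pos1 unfolding T_def .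
  have first: "cond_indep (cond_on M X C1 d0) X N A B S \<longleftrightarrow> cond_indep M X N A B (S \<union> {C1})"
  proof
    assume c0: "cond_indep (cond_on M X C1 d0) X N A B S"
    then have c1: "cond_indep (cond_on M X C1 d1) X N A B S" using transfer sets by blast
    show "cond_indep M X N A B (S \<union> {C1})" unfolding ciM
    proof (intro ballI)
      fix G H assume G: "G \<in> sets (gen_sigma M X N A)" and H: "H \<in> sets (gen_sigma M X N B)"
      have GM: "G \<in> sets M" and HM: "H \<in> sets M" using G H sA sB by auto
      have a0: "AE x in M. x \<in> T d0 \<longrightarrow> R d0 G H x" using c0 ciD[OF p0] G H by auto
      have a1: "AE x in M. x \<in> T d1 \<longrightarrow> R d1 G H x" using c1 ciD[OF p1] G H by auto
      show "AE x in M. Q G H x"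
        using a0 a1 dom[OF p0 insertI1 GM HM] dom[OF p1 _ GM HM, simplified] AE_space
        by eventually_elim (use sp in blast)
    qed
  next
    assume c: "cond_indep M X N A B (S \<union> {C1})"
    show "cond_indep (cond_on M X C1 d0) X N A B S" unfolding ciD[OF p0 insertI1]
    proof (intro ballI)
      fix G H assume G: "G \<in> sets (gen_sigma M X N A)" and H: "H \<in> sets (gen_sigma M X N B)"
      have GM: "G \<in> sets M" and HM: "H \<in> sets M" using G H sA sB by auto
      have "AE x in M. Q G H x" using c ciM G H by auto
      then show "AE x in M. x \<in> T d0 \<longrightarrow> R d0 G H x"
        using dom[OF p0 insertI1 GM HM] by eventually_elim auto
    qed
  qed
  show ?thesis using first second by blast
qed

end
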